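(* Consider $N$ agents, all of whose neighborhoods are $\mathcal{N}(i)=\{1,\dots,N\}$ (fully connected debate graph), on a probability space with sub-$\sigma$-algebras $\mathcal{F}_{t-1}$. At round $t-1$ each agent $j$ emits random variables $y_{j,t-1}\in\{1,\dots,K\}$ and $w_{j,t-1}\in(0,1]$. Let $p_{j,t-1}=\Pr(y_{j,t-1}=1\mid\mathcal{F}_{t-1})$, $\rho_{j,t-1}=\mathbb{E}[w_{j,t-1}\mathbf{1}\{y_{j,t-1}=1\}\mid\mathcal{F}_{t-1}]/\mathbb{E}[w_{j,t-1}\mid\mathcal{F}_{t-1}]$, and $$q_{i,t-1}=\frac{\mathbb{E}\big[\sum_{j}w_{j,t-1}\mathbf{1}\{y_{j,t-1}=1\}\mid\mathcal{F}_{t-1}\big]}{\mathbb{E}\big[\sum_j w_{j,t-1}\mid\mathcal{F}_{t-1}\big]}.$$ Assume confidence is positively correlated with correctness: $\rho_{j,t-1}\ge p_{j,t-1}$ almost surely for all $j,t$, with strict inequality on a set of positive probability for at least one agent and round. Assume homogeneity: $p_{j,t-1}=p_{i,t-1}$ for all $j$. Then $q_{i,t-1}\ge p_{i,t-1}$, with strict inequality on a set of positive probability.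
   Context: Option $1$ is the unique correct answer; $\mathcal{F}_{t-1}$ is the debate history up to round $t-1$; $w_{j,t-1}$ is agent $j$'s expressed confidence and $p_{j,t-1}$ its probability of answering correctly. *)

theory Defs
  imports "HOL-Probability.Probability"
begin

definition correct :: "('a \<Rightarrow> nat) \<Rightarrow> 'a \<Rightarrow> real" where
  "correct y x = (if y x = 1 then 1 else 0)"

definition p_cond :: "'a measure \<Rightarrow> 'a measure \<Rightarrow> ('a \<Rightarrow> nat) \<Rightarrow> 'a \<Rightarrow> real" where
  "p_cond M F y = real_cond_exp M F (correct y)"

definition rho_cond :: "'a measure \<Rightarrow> 'a measure \<Rightarrow> ('a \<Rightarrow> nat) \<Rightarrow> ('a \<Rightarrow> real) \<Rightarrow> 'a \<Rightarrow> real" where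
  "rho_cond M F y w = (\<lambda>x. real_cond_exp M F (\<lambda>z. w z * correct y z) x / real_cond_exp M F w x)"

definition q_cond :: "'a measure \<Rightarrow> 'a measure \<Rightarrow> nat set \<Rightarrow> (nat \<Rightarrow> 'a \<Rightarrow> nat) \<Rightarrow> (nat \<Rightarrow> 'a \<Rightarrow> real) \<Rightarrow> 'a \<Rightarrow> real" where
  "q_cond M F Nb y w = (\<lambda>x. real_cond_exp M F (\<lambda>z. \<Sum>j\<in>Nb. w j z * correct (y j) z) x
                          / real_cond_exp M F (\<lambda>z. \<Sum>j\<in>Nb. w j z) x)"

end

theory Submission
  imports Defs
begin

lemma ptwise:
  fixes E W :: "nat \<Rightarrow> real"
  assumes "finite I" "i \<in> I" "\<And>j. j \<in> I \<Longrightarrow> W j > 0"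
    "\<And>j. j \<in> I \<Longrightarrow> E j / W j \<ge> P"
  shows "(\<Sum>j\<in>I. E j) / (\<Sum>j\<in>I. W j) \<ge> P"
    and "j0 \<in> I \<Longrightarrow> E j0 / W j0 > P \<Longrightarrow> (\<Sum>j\<in>I. E j) / (\<Sum>j\<in>I. W j) > P"
proof -
  have le: "P * W j \<le> E j" if "j \<in> I" for j
    using assms(3,4)[OF that] by (simp add: pos_le_divide_eq)
  have Wpos: "(\<Sum>j\<in>I. W j) > 0"
    using assms by (intro sum_pos) auto
  have "P * (\<Sum>j\<in>I. W j) \<le> (\<Sum>j\<in>I. E j)"
    unfolding sum_distrib_left using le by (rule sum_mono)
  then show "(\<Sum>j\<in>I. E j) / (\<Sum>j\<in>I. W j) \<ge> P" using Wpos by (simp add: pos_le_divide_eq)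
  assume j0: "j0 \<in> I" "E j0 / W j0 > P"
  have "P * W j0 < E j0" using j0 assms(3)[OF j0(1)] by (simp add: pos_less_divide_eq)
  then have "(\<Sum>j\<in>I. P * W j) < (\<Sum>j\<in>I. E j)"
    using le j0(1) assms(1) by (intro sum_strict_mono_ex1) auto
  then have "P * (\<Sum>j\<in>I. W j) < (\<Sum>j\<in>I. E j)" by (simp add: sum_distrib_left)
  then show "(\<Sum>j\<in>I. E j) / (\<Sum>j\<in>I. W j) > P" using Wpos by (simp add: pos_less_divide_eq)
qed

lemma keyt:
  fixes M G :: "'a measure" and ys :: "nat \<Rightarrow> 'a \<Rightarrow> nat" and ws :: "nat \<Rightarrow> 'a \<Rightarrow> real"
  assumes "prob_space M" "subalgebra M G" "finite I" "i \<in> I"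
    and ym: "\<And>j. ys j \<in> measurable M (count_space UNIV)"
    and wm: "\<And>j. ws j \<in> borel_measurable M"
    and wb: "\<And>j x. x \<in> space M \<Longrightarrow> ws j x \<in> {0<..1}"
    and pc: "\<And>j. j \<in> I \<Longrightarrow> AE x in M. rho_cond M G (ys j) (ws j) x \<ge> p_cond M G (ys j) x"
    and hom: "\<And>j. j \<in> I \<Longrightarrow> AE x in M. p_cond M G (ys j) x = p_cond M G (ys i) x"
  shows "AE x in M. q_cond M G I ys ws x \<ge> p_cond M G (ys i) x"
    and "j0 \<in> I \<Longrightarrow> AE x in M. rho_cond M G (ys j0) (ws j0) x > p_cond M G (ys j0) x
            \<longrightarrow> q_cond M G I ys ws x > p_cond M G (ys i) x"
proof -
  interpret prob_space M by fact
  interpret finite_measure_subalgebra M G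
    by unfold_locales (use assms(2) in auto)
  have cm: "correct (ys j) \<in> borel_measurable M" for j
  proof -
    have "(\<lambda>x. if ys j x = 1 then 1 else (0::real)) \<in> borel_measurable M"
      using ym[of j] by measurable
    then show ?thesis unfolding correct_def[abs_def] .
  qed
  have wi: "integrable M (ws j)" for j
    by (rule integrable_const_bound[where B=1]) (use wb wm in \<open>auto simp: less_eq_real_def\<close>)
  have wci: "integrable M (\<lambda>z. ws j z * correct (ys j) z)" for j
  proof (rule integrable_const_bound[where B=1])
    show "AE x in M. norm (ws j x * correct (ys j) x) \<le> 1"
      using wb by (auto simp: correct_def less_eq_real_def)
    show "(\<lambda>z. ws j z * correct (ys j) z) \<in> borel_measurable M"
      using wm cm by (intro borel_measurable_times) auto
  qed
  let ?E = "\<lambda>j. real_cond_exp M G (\<lambda>z. ws j z * correct (ys j) z)"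
  let ?W = "\<lambda>j. real_cond_exp M G (ws j)"
  have Wp: "AE x in M. \<forall>j\<in>I. ?W j x > 0"
    apply (rule AE_finite_allI[OF assms(3)])
    apply (rule real_cond_exp_gr_c[OF wi])
    using wb by auto
  have PC: "AE x in M. \<forall>j\<in>I. ?E j x / ?W j x \<ge> p_cond M G (ys j) x"
    using AE_finite_allI[OF assms(3) pc] by (simp add: rho_cond_def)
  have HO: "AE x in M. \<forall>j\<in>I. p_cond M G (ys j) x = p_cond M G (ys i) x"
    using AE_finite_allI[OF assms(3) hom] .
  have S1: "AE x in M. real_cond_exp M G (\<lambda>z. \<Sum>j\<in>I. ws j z * correct (ys j) z) x = (\<Sum>j\<in>I. ?E j x)"
    using wci by (rule real_cond_exp_sum)
  have S2: "AE x in M. real_cond_exp M G (\<lambda>z. \<Sum>j\<in>I. ws j z) x = (\<Sum>j\<in>I. ?W j x)"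
    using wi by (rule real_cond_exp_sum)
  have Q: "AE x in M. q_cond M G I ys ws x = (\<Sum>j\<in>I. ?E j x) / (\<Sum>j\<in>I. ?W j x)"
    using S1 S2 by eventually_elim (simp add: q_cond_def)
  show "AE x in M. q_cond M G I ys ws x \<ge> p_cond M G (ys i) x"
    using Wp PC HO Q
  proof eventually_elim
    case (elim x)
    show ?case unfolding elim(4)
      by (rule ptwise(1)[OF assms(3,4)]) (use elim in auto)
  qed
  assume j0: "j0 \<in> I"
  show "AE x in M. rho_cond M G (ys j0) (ws j0) x > p_cond M G (ys j0) x
            \<longrightarrow> q_cond M G I ys ws x > p_cond M G (ys i) x"
    using Wp PC HO Q
  proof eventually_elim
    case (elim x)
    show ?case
    proof
      assume r: "rho_cond M G (ys j0) (ws j0) x > p_cond M G (ys j0) x"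
      show "q_cond M G I ys ws x > p_cond M G (ys i) x" unfolding elim(4)
        by (rule ptwise(2)[OF assms(3,4) _ _ j0]) (use elim j0 r in \<open>auto simp: rho_cond_def\<close>)
    qed
  qed
qed

theorem corollary1:
  fixes M :: "'a measure" and F :: "nat \<Rightarrow> 'a measure" and N K :: nat
    and y :: "nat \<Rightarrow> nat \<Rightarrow> 'a \<Rightarrow> nat" and w :: "nat \<Rightarrow> nat \<Rightarrow> 'a \<Rightarrow> real"
  assumes "prob_space M"
    and "\<And>t. subalgebra M (F t)"
    and "\<And>j t. y j t \<in> measurable M (count_space UNIV)"
    and "\<And>j t. w j t \<in> borel_measurable M"
    and "\<And>j t x. x \<in> space M \<Longrightarrow> y j t x \<in> {1..K}"
    and "\<And>j t x. x \<in> space M \<Longrightarrow> w j t x \<in> {0<..1}"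
    and pos_corr: "\<And>j t. j \<in> {1..N} \<Longrightarrow>
        AE x in M. rho_cond M (F t) (y j t) (w j t) x \<ge> p_cond M (F t) (y j t) x"
    and strict: "\<exists>j\<in>{1..N}. \<exists>t. measure M {x \<in> space M.
        rho_cond M (F t) (y j t) (w j t) x > p_cond M (F t) (y j t) x} > 0"
    and homog: "\<And>i j t. i \<in> {1..N} \<Longrightarrow> j \<in> {1..N} \<Longrightarrow>
        AE x in M. p_cond M (F t) (y j t) x = p_cond M (F t) (y i t) x"
  shows "(\<forall>i\<in>{1..N}. \<forall>t. AE x in M.
            q_cond M (F t) {1..N} (\<lambda>j. y j t) (\<lambda>j. w j t) x \<ge> p_cond M (F t) (y i t) x)
       \<and> (\<forall>i\<in>{1..N}. \<exists>t. measure M {x \<in> space M.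
            q_cond M (F t) {1..N} (\<lambda>j. y j t) (\<lambda>j. w j t) x > p_cond M (F t) (y i t) x} > 0)"
proof -
  interpret prob_space M by fact
  have fin: "finite {1..N}" by simp
  have A: "AE x in M. q_cond M (F t) {1..N} (\<lambda>j. y j t) (\<lambda>j. w j t) x \<ge> p_cond M (F t) (y i t) x"
    if "i \<in> {1..N}" for i t
    by (rule keyt(1)[OF assms(1,2) fin that]) (use assms(3,4,6) pos_corr homog[OF that] in auto)
  obtain j0 t0 where j0: "j0 \<in> {1..N}" and m0: "measure M {x \<in> space M.
        rho_cond M (F t0) (y j0 t0) (w j0 t0) x > p_cond M (F t0) (y j0 t0) x} > 0"
    using strict by blast
  have B: "\<exists>t. measure M {x \<in> space M.
            q_cond M (F t) {1..N} (\<lambda>j. y j t) (\<lambda>j. w j t) x > p_cond M (F t) (y i t) x} > 0"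
    if i: "i \<in> {1..N}" for i
  proof (intro exI)
    have imp: "AE x in M. rho_cond M (F t0) (y j0 t0) (w j0 t0) x > p_cond M (F t0) (y j0 t0) x
            \<longrightarrow> q_cond M (F t0) {1..N} (\<lambda>j. y j t0) (\<lambda>j. w j t0) x > p_cond M (F t0) (y i t0) x"
      by (rule keyt(2)[OF assms(1,2) fin i _ _ _ _ _ j0]) (use assms(3,4,6) pos_corr homog[OF i] in auto)
    have meas: "{x \<in> space M. q_cond M (F t0) {1..N} (\<lambda>j. y j t0) (\<lambda>j. w j t0) x > p_cond M (F t0) (y i t0) x} \<in> sets M"
      unfolding q_cond_def p_cond_def by measurable
    have "emeasure M {x \<in> space M.
        rho_cond M (F t0) (y j0 t0) (w j0 t0) x > p_cond M (F t0) (y j0 t0) x}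
      \<le> emeasure M {x \<in> space M. q_cond M (F t0) {1..N} (\<lambda>j. y j t0) (\<lambda>j. w j t0) x > p_cond M (F t0) (y i t0) x}"
      by (rule emeasure_mono_AE[OF _ meas]) (use imp in \<open>auto\<close>)
    then have "measure M {x \<in> space M.
        rho_cond M (F t0) (y j0 t0) (w j0 t0) x > p_cond M (F t0) (y j0 t0) x}
      \<le> measure M {x \<in> space M. q_cond M (F t0) {1..N} (\<lambda>j. y j t0) (\<lambda>j. w j t0) x > p_cond M (F t0) (y i t0) x}"
      unfolding measure_def by (rule enn2real_mono) (simp_all add: less_top[symmetric])
    then show "measure M {x \<in> space M. q_cond M (F t0) {1..N} (\<lambda>j. y j t0) (\<lambda>j. w j t0) x > p_cond M (F t0) (y i t0) x} > 0"
      using m0 by linarith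
  qed
  show ?thesis using A B by blast
qed

end
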